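(* Let $n\ge 2$, $I=\{1,\dots,n-1\}$, and let $Y_n^>$ be the positive subalgebra of the Yangian of $\mathfrak{sl}_n$ (defined in the context). Let $\mathbf{Y}_n^>$ be the $\mathbb{Z}[\frac12]$-subalgebra of $Y_n^>$ generated by the divided powers $e_{i,r}^t/t!$ for $i\in I$, $r,t\in\mathbb{N}$. Then for every positive root $\beta=[i,j]$ ($1\le i\le j\le n-1$) and all $r,t\in\mathbb{N}$, the divided power $$\mathbf{e}_\beta(r)^{(t)}:=\frac{e_\beta(r)^t}{t!}$$ lies in $\mathbf{Y}_n^>$.
   Context: $\mathbb{N}=\{0,1,2,\dots\}$. $(c_{ij})_{i,j\in I}$ is the Cartan matrix of $\mathfrak{sl}_n$: $c_{ii}=2$, $c_{i,i\pm1}=-1$, $c_{ij}=0$ if $|i-j|>1$. $Y_n^>$ is the associative $\mathbb{C}$-algebra generated by $\{e_{i,r}: i\in I, r\in\mathbb{N}\}$ subject to the relations $[e_{i,r+1},e_{j,s}]-[e_{i,r},e_{j,s+1}]=\frac{c_{ij}}{2}(e_{i,r}e_{j,s}+e_{j,s}e_{i,r})$; $[e_{i,r},e_{j,s}]=0$ if $c_{ij}=0$; $[e_{i,r_1},[e_{i,r_2},e_{j,s}]]+[e_{i,r_2},[e_{i,r_1},e_{j,s}]]=0$ if $c_{ij}=-1$. The positive roots of $\mathfrak{sl}_n$ are $[i,j]:=\alpha_i+\alpha_{i+1}+\dots+\alpha_j$ for $1\le i\le j\le n-1$. For $\beta=[i,j]$ and $r\in\mathbb{N}$, $e_\beta(r):=[\cdots[[e_{i,r},e_{i+1,0}],e_{i+2,0}],\dots,e_{j,0}]$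 (so $e_{[i,i]}(r)=e_{i,r}$). *)

theory Defs
  imports Complex_Main
begin

(* A complex algebra structure on a ring 'a: a unital ring homomorphism phi from C into the centre. *)
definition complex_algebra_hom :: "(complex \<Rightarrow> 'a::ring_1) \<Rightarrow> bool" where
  "complex_algebra_hom \<phi> \<longleftrightarrow>
     (\<forall>a b. \<phi> (a + b) = \<phi> a + \<phi> b) \<and> (\<forall>a b. \<phi> (a * b) = \<phi> a * \<phi> b) \<and>
     \<phi> 1 = 1 \<and> (\<forall>c x. \<phi> c * x = x * \<phi> c)"

definition commut :: "'a::ring \<Rightarrow> 'a \<Rightarrow> 'a" where
  "commut x y = x * y - y * x"

definition cartan :: "nat \<Rightarrow> nat \<Rightarrow> int" where
  "cartan i j = (if i = j then 2 else if i = j + 1 \<or> j = i + 1 then -1 else 0)"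

definition yangian_pos_rels :: "nat \<Rightarrow> (complex \<Rightarrow> 'a::ring_1) \<Rightarrow> (nat \<Rightarrow> nat \<Rightarrow> 'a) \<Rightarrow> bool" where
  "yangian_pos_rels n \<phi> e \<longleftrightarrow>
    (\<forall>i\<in>{1..n-1}. \<forall>j\<in>{1..n-1}. \<forall>r s.
       commut (e i (r+1)) (e j s) - commut (e i r) (e j (s+1))
         = \<phi> (of_int (cartan i j) / 2) * (e i r * e j s + e j s * e i r)) \<and>
    (\<forall>i\<in>{1..n-1}. \<forall>j\<in>{1..n-1}. \<forall>r s.
       cartan i j = 0 \<longrightarrow> commut (e i r) (e j s) = 0) \<and>
    (\<forall>i\<in>{1..n-1}. \<forall>j\<in>{1..n-1}. \<forall>r1 r2 s.
       cartan i j = -1 \<longrightarrow>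
         commut (e i r1) (commut (e i r2) (e j s)) + commut (e i r2) (commut (e i r1) (e j s)) = 0)"

inductive_set zhalf_subalg :: "(complex \<Rightarrow> 'a::ring_1) \<Rightarrow> 'a set \<Rightarrow> 'a set"
  for \<phi> :: "complex \<Rightarrow> 'a" and G :: "'a set" where
  gen: "x \<in> G \<Longrightarrow> x \<in> zhalf_subalg \<phi> G"
| one: "1 \<in> zhalf_subalg \<phi> G"
| add: "x \<in> zhalf_subalg \<phi> G \<Longrightarrow> y \<in> zhalf_subalg \<phi> G \<Longrightarrow> x + y \<in> zhalf_subalg \<phi> G"
| neg: "x \<in> zhalf_subalg \<phi> G \<Longrightarrow> - x \<in> zhalf_subalg \<phi> G"
| mult: "x \<in> zhalf_subalg \<phi> G \<Longrightarrow> y \<in> zhalf_subalg \<phi> G \<Longrightarrow> x * y \<in> zhalf_subalg \<phi> G"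
| half: "x \<in> zhalf_subalg \<phi> G \<Longrightarrow> \<phi> (1/2) * x \<in> zhalf_subalg \<phi> G"

definition divpow :: "(complex \<Rightarrow> 'a::ring_1) \<Rightarrow> 'a \<Rightarrow> nat \<Rightarrow> 'a" where
  "divpow \<phi> x t = \<phi> (1 / of_nat (fact t)) * x ^ t"

fun root_vec :: "(nat \<Rightarrow> nat \<Rightarrow> 'a::ring) \<Rightarrow> nat \<Rightarrow> nat \<Rightarrow> nat \<Rightarrow> 'a" where
  "root_vec e i 0 r = e i r"
| "root_vec e i (Suc k) r = commut (root_vec e i k r) (e (i + Suc k) 0)"

definition e_beta :: "(nat \<Rightarrow> nat \<Rightarrow> 'a::ring) \<Rightarrow> nat \<Rightarrow> nat \<Rightarrow> nat \<Rightarrow> 'a" where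
  "e_beta e i j r = root_vec e i (j - i) r"

end

theory Submission
  imports Defs
begin

lemma commut_jacobi: "commut (a::'a::ring) (commut b c) = commut (commut a b) c + commut b (commut a c)"
  unfolding commut_def by (simp add: algebra_simps)

lemma commut_zero_left[simp]: "commut 0 (x::'a::ring) = 0"
  unfolding commut_def by simp

lemma commut_zero_right[simp]: "commut (x::'a::ring) 0 = 0"
  unfolding commut_def by simp

lemma commut_antisym: "commut (a::'a::ring) b = - commut b a"
  unfolding commut_def by simp

lemma commut_serre_op:
  "commut (commut b (commut b a)) (c::'a::ring) =
     commut b (commut b (commut a c)) - (commut b (commut a (commut b c)) + commut b (commut a (commut b c)))
     + commut a (commut b (commut b c))"
  unfolding commut_def by (simp add: left_diff_distrib right_diff_distrib distrib_left distrib_right mult.assoc)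

lemma commut_of_commuting:
  assumes "commut (a::'a::ring) c = 0" "commut b c = 0"
  shows "commut (commut a b) c = 0"
  using commut_jacobi[of a b c] assms by simp

lemma stepB:
  assumes "commut (y::'a::ring) a = 0"
  shows "commut y (commut y (commut a w)) = commut a (commut y (commut y w))"
proof -
  have "commut y (commut a w) = commut a (commut y w)"
    using commut_jacobi[of y a w] assms by simp
  moreover have "commut y (commut a (commut y w)) = commut a (commut y (commut y w))"
    using commut_jacobi[of y a "commut y w"] assms by simp
  ultimately show ?thesis by simp
qed

lemma stepA:
  fixes a b c :: "'a::ring"
  assumes two: "\<And>X::'a. X + X = 0 \<Longrightarrow> X = 0"
    and ac: "commut a c = 0" and aab: "commut a (commut a b) = 0"
    and bba: "commut b (commut b a) = 0" and bbc: "commut b (commut b c) = 0"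
  shows "commut (commut a b) (commut (commut a b) c) = 0"
proof -
  define u where "u = commut a b"
  have uc: "commut u c = commut a (commut b c)"
    using commut_jacobi[of a b c] ac u_def by simp
  have au: "commut a u = 0" using aab u_def by simp
  have aav: "commut a (commut a (commut b c)) = 0"
    using commut_jacobi[of a u c] uc au ac by simp
  have "commut b (commut a (commut b c)) + commut b (commut a (commut b c)) = 0"
    using commut_serre_op[of b a c] bba ac bbc by simp (metis add.left_inverse)
  hence W: "commut b (commut a (commut b c)) = 0" by (rule two)
  have "commut u (commut a (commut b c)) =
        commut a (commut b (commut a (commut b c))) - commut b (commut a (commut a (commut b c)))"
    using commut_jacobi[of a b "commut a (commut b c)"] u_def by (simp add: algebra_simps)
  also have "\<dots> = 0" using W aav by simp
  finally show ?thesis using uc u_def by simp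
qed

lemma heis1:
  fixes x y z :: "'a::ring_1"
  assumes yz: "y*z = z*y" and xy: "x*y - y*x = z"
  shows "x * y^b = y^b * x + of_nat b * (y^(b-1) * z)"
proof (induction b)
  case 0
  then show ?case by simp
next
  case (Suc b)
  have xy': "x*y = y*x + z" using xy by (simp add: algebra_simps)
  have "x * y^Suc b = (x * y^b) * y" by (simp only: power_Suc2 mult.assoc)
  also have "\<dots> = y^b * (x*y) + of_nat b * (y^(b-1) * (z * y))"
    using Suc by (simp add: algebra_simps)
  also have "\<dots> = y^b * (y*x) + y^b*z + of_nat b * (y^(b-1) * y * z)"
    using xy' yz by (simp add: algebra_simps)
  also have "\<dots> = y^Suc b * x + of_nat (Suc b) * (y^(Suc b - 1) * z)"
  proof (cases b)
    case 0
    then show ?thesis by simp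
  next
    case (Suc m)
    have h1: "y^(b-1)*y*z = y^b*z" using Suc by (metis diff_Suc_1 power_Suc2)
    have h2: "y^b*(y*x) = y^Suc b * x" by (simp only: power_Suc2 mult.assoc)
    show ?thesis unfolding h1 h2 by (simp add: algebra_simps)
  qed
  finally show ?case .
qed

lemma choose_fact_step:
  "(b choose k) * fact k * (b - k) = (b choose Suc k) * (fact (Suc k) :: nat)"
proof -
  have "(b - k) * (b choose k) = Suc k * (b choose Suc k)"
  proof (cases b)
    case 0
    then show ?thesis by simp
  next
    case (Suc m)
    have "(b - k) * (b choose k) = b * ((b - 1) choose k)" by (rule binomial_absorb_comp)
    also have "\<dots> = Suc k * (b choose Suc k)" using Suc Suc_times_binomial[of k m] by simp
    finally show ?thesis .
  qed
  then show ?thesis by (simp add: algebra_simps)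
qed

definition hc :: "nat \<Rightarrow> nat \<Rightarrow> nat \<Rightarrow> nat" where
  "hc a b k = (a choose k) * (b choose k) * fact k"

lemma hc_step: "hc a b k + (case k of 0 \<Rightarrow> 0 | Suc j \<Rightarrow> hc a b j * (b - j)) = hc (Suc a) b k"
proof (cases k)
  case 0
  then show ?thesis by (simp add: hc_def)
next
  case (Suc j)
  have "hc a b j * (b - j) = (a choose j) * ((b choose j) * fact j * (b - j))"
    by (simp add: hc_def algebra_simps)
  also have "\<dots> = (a choose j) * (b choose Suc j) * fact (Suc j)"
    using choose_fact_step[of b j] by (simp add: mult.assoc)
  finally show ?thesis using Suc by (simp add: hc_def algebra_simps)
qed

lemma heis2:
  fixes x y z :: "'a::ring_1"
  assumes xz: "x*z = z*x" and yz: "y*z = z*y" and xy: "x*y - y*x = z"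
  shows "x^a * y^b = (\<Sum>k\<le>a. of_nat (hc a b k) * (y^(b-k) * z^k * x^(a-k)))"
proof (induction a)
  case 0
  then show ?case by (simp add: hc_def)
next
  case (Suc a)
  define F where "F k = y^(b-k) * z^k * x^(Suc a - k)" for k
  define h where "h k = (case k of 0 \<Rightarrow> 0 | Suc j \<Rightarrow> hc a b j * (b - j))" for k
  have key: "x * (y^(b-k) * z^k * x^(a-k)) = F k + of_nat (b-k) * F (Suc k)" if "k \<le> a" for k
  proof -
    have e1: "x * y^(b-k) = y^(b-k) * x + of_nat (b-k) * (y^(b - Suc k) * z)"
      using heis1[OF yz xy, of "b-k"] by simp
    have e2: "x * z^k = z^k * x" using power_commuting_commutes[of z x k] xz by simp
    have e3: "x * x^(a-k) = x^(Suc a - k)" using that by (simp add: Suc_diff_le)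
    have "x * (y^(b-k) * z^k * x^(a-k)) = (x * y^(b-k)) * z^k * x^(a-k)" by (simp add: mult.assoc)
    also have "\<dots> = y^(b-k) * (x * z^k) * x^(a-k) + of_nat (b-k) * (y^(b - Suc k) * (z * z^k) * x^(a-k))"
      unfolding e1 by (simp add: algebra_simps)
    also have "\<dots> = y^(b-k) * z^k * (x * x^(a-k)) + of_nat (b-k) * (y^(b - Suc k) * z^(Suc k) * x^(a-k))"
      unfolding e2 by (simp add: mult.assoc)
    also have "\<dots> = F k + of_nat (b-k) * F (Suc k)"
      unfolding e3 F_def by simp
    finally show ?thesis .
  qed
  have "x^Suc a * y^b = x * (x^a * y^b)" by (simp add: mult.assoc)
  also have "\<dots> = (\<Sum>k\<le>a. of_nat (hc a b k) * (x * (y^(b-k) * z^k * x^(a-k))))"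
    unfolding Suc sum_distrib_left
    by (intro sum.cong refl) (metis mult.assoc mult_of_nat_commute)
  also have "\<dots> = (\<Sum>k\<le>a. of_nat (hc a b k) * F k) + (\<Sum>k\<le>a. of_nat (h (Suc k)) * F (Suc k))"
    unfolding sum.distrib[symmetric]
  proof (intro sum.cong refl)
    fix k assume "k \<in> {..a}"
    then have "k \<le> a" by simp
    show "of_nat (hc a b k) * (x * (y^(b-k) * z^k * x^(a-k))) =
          of_nat (hc a b k) * F k + of_nat (h (Suc k)) * F (Suc k)"
      unfolding key[OF \<open>k \<le> a\<close>] h_def by (simp add: distrib_left mult.assoc)
  qed
  also have "(\<Sum>k\<le>a. of_nat (hc a b k) * F k) = (\<Sum>k\<le>Suc a. of_nat (hc a b k) * F k)"
    by (simp add: hc_def binomial_eq_0)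
  also have "(\<Sum>k\<le>a. of_nat (h (Suc k)) * F (Suc k)) = (\<Sum>k\<le>Suc a. of_nat (h k) * F k)"
    by (simp only: sum.atMost_Suc_shift) (simp add: h_def)
  also have "(\<Sum>k\<le>Suc a. of_nat (hc a b k) * F k) + (\<Sum>k\<le>Suc a. of_nat (h k) * F k)
      = (\<Sum>k\<le>Suc a. of_nat (hc (Suc a) b k) * F k)"
    unfolding sum.distrib[symmetric]
  proof (intro sum.cong refl)
    fix k
    have "hc (Suc a) b k = hc a b k + h k" using hc_step[of a b k] h_def by simp
    then show "of_nat (hc a b k) * F k + of_nat (h k) * F k = of_nat (hc (Suc a) b k) * F k"
      by (simp add: distrib_right)
  qed
  finally show ?case unfolding F_def .
qed

context
  fixes \<phi> :: "complex \<Rightarrow> 'a::ring_1"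
  assumes hom: "complex_algebra_hom \<phi>"
begin

lemma phi_add: "\<phi> (a + b) = \<phi> a + \<phi> b" using hom unfolding complex_algebra_hom_def by blast
lemma phi_mult: "\<phi> (a * b) = \<phi> a * \<phi> b" using hom unfolding complex_algebra_hom_def by blast
lemma phi_one: "\<phi> 1 = 1" using hom unfolding complex_algebra_hom_def by blast
lemma phi_central: "\<phi> c * x = x * \<phi> c" using hom unfolding complex_algebra_hom_def by blast

lemma phi_zero: "\<phi> 0 = 0"
  using phi_add[of 0 0] by simp

lemma phi_of_nat: "\<phi> (of_nat m) = of_nat m"
  by (induction m) (simp_all add: phi_zero phi_add phi_one)

lemma two_inv: "(X::'a) + X = 0 \<Longrightarrow> X = 0"
proof -
  assume h: "X + X = 0"
  have "X = \<phi> (1/2 + 1/2) * X" by (simp add: phi_one)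
  also have "\<dots> = \<phi> (1/2) * X + \<phi> (1/2) * X" by (simp only: phi_add distrib_right)
  also have "\<dots> = \<phi> (1/2) * (X + X)" by (simp only: distrib_left)
  also have "\<dots> = 0" using h by simp
  finally show "X = 0" .
qed

lemma phi_combine: "\<phi> a * X * (\<phi> b * Y) = \<phi> (a * b) * (X * Y)"
proof -
  have "\<phi> a * X * (\<phi> b * Y) = \<phi> a * (X * \<phi> b) * Y" by (simp add: mult.assoc)
  also have "\<dots> = \<phi> a * (\<phi> b * X) * Y" by (simp add: phi_central)
  finally show ?thesis by (simp add: phi_mult mult.assoc)
qed

lemma divpow_0: "divpow \<phi> x 0 = 1"
  by (simp add: divpow_def phi_one)

lemma coeff_eq:
  assumes "k \<le> t"
  shows "(1 / of_nat (fact t) * (1 / of_nat (fact t))) * of_nat (hc t t k)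
        = 1 / of_nat (fact (t-k)) * (1 / of_nat (fact k)) * (1 / of_nat (fact (t-k)) :: complex)"
proof -
  have f: "of_nat (fact k) * of_nat (fact (t-k)) * of_nat (t choose k) = (of_nat (fact t) :: complex)"
    by (simp only: of_nat_mult[symmetric] binomial_fact_lemma[OF assms])
  have nz: "(of_nat (fact k) :: complex) \<noteq> 0" "(of_nat (fact (t-k)) :: complex) \<noteq> 0"
    by simp_all
  have nzC: "(of_nat (t choose k) :: complex) \<noteq> 0" using assms by simp
  have gen: "\<And>A B C :: complex. A \<noteq> 0 \<Longrightarrow> B \<noteq> 0 \<Longrightarrow> C \<noteq> 0 \<Longrightarrow>
     1 / (A*B*C) * (1 / (A*B*C)) * (C*C*A) = 1/B * (1/A) * (1/B)"
    by (simp add: field_simps)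
  show ?thesis unfolding hc_def of_nat_mult f[symmetric]
    by (rule gen[OF nz nzC])
qed

lemma divided_identity:
  fixes x y z :: 'a
  assumes xz: "x*z = z*x" and yz: "y*z = z*y" and xy: "x*y - y*x = z"
  shows "divpow \<phi> x t * divpow \<phi> y t
       = (\<Sum>k\<le>t. divpow \<phi> y (t-k) * divpow \<phi> z k * divpow \<phi> x (t-k))"
proof -
  have "divpow \<phi> x t * divpow \<phi> y t
       = \<phi> (1 / of_nat (fact t) * (1 / of_nat (fact t))) * (x^t * y^t)"
    unfolding divpow_def by (rule phi_combine)
  also have "\<dots> = (\<Sum>k\<le>t. \<phi> (1 / of_nat (fact t) * (1 / of_nat (fact t))) *
                  (of_nat (hc t t k) * (y^(t-k) * z^k * x^(t-k))))"
    unfolding heis2[OF xz yz xy, of t t] sum_distrib_left ..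
  also have "\<dots> = (\<Sum>k\<le>t. divpow \<phi> y (t-k) * divpow \<phi> z k * divpow \<phi> x (t-k))"
  proof (intro sum.cong refl)
    fix k assume "k \<in> {..t}"
    then have kt: "k \<le> t" by simp
    have "\<phi> (1 / of_nat (fact t) * (1 / of_nat (fact t))) * (of_nat (hc t t k) * (y^(t-k) * z^k * x^(t-k)))
        = \<phi> (1 / of_nat (fact t) * (1 / of_nat (fact t)) * of_nat (hc t t k)) * (y^(t-k) * z^k * x^(t-k))"
      by (simp only: phi_mult phi_of_nat mult.assoc)
    also have "\<dots> = \<phi> (1 / of_nat (fact (t-k)) * (1 / of_nat (fact k)) * (1 / of_nat (fact (t-k))))
                     * (y^(t-k) * z^k * x^(t-k))"
      unfolding coeff_eq[OF kt] ..
    also have "\<dots> = divpow \<phi> y (t-k) * divpow \<phi> z k * divpow \<phi> x (t-k)"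
      unfolding divpow_def phi_combine[symmetric] by (simp add: mult.assoc)
    finally show "\<phi> (1 / of_nat (fact t) * (1 / of_nat (fact t))) * (of_nat (hc t t k) * (y^(t-k) * z^k * x^(t-k)))
        = divpow \<phi> y (t-k) * divpow \<phi> z k * divpow \<phi> x (t-k)" .
  qed
  finally show ?thesis .
qed

end

lemma zh_zero: "0 \<in> zhalf_subalg \<phi> G"
  using zhalf_subalg.add[OF zhalf_subalg.one zhalf_subalg.neg[OF zhalf_subalg.one]] by simp

lemma zh_diff: "a \<in> zhalf_subalg \<phi> G \<Longrightarrow> b \<in> zhalf_subalg \<phi> G \<Longrightarrow> a - b \<in> zhalf_subalg \<phi> G"
  using zhalf_subalg.add[OF _ zhalf_subalg.neg] by (metis diff_conv_add_uminus)

lemma zh_sum: "finite A \<Longrightarrow> (\<And>k. k \<in> A \<Longrightarrow> f k \<in> zhalf_subalg \<phi> G) \<Longrightarrow> sum f A \<in> zhalf_subalg \<phi> G"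
  by (induction A rule: finite_induct) (auto intro: zh_zero zhalf_subalg.add)

lemma heis_mem:
  fixes x y z :: "'a::ring_1"
  assumes hom: "complex_algebra_hom \<phi>"
    and xz: "x*z = z*x" and yz: "y*z = z*y" and xy: "x*y - y*x = z"
    and X: "\<And>a. divpow \<phi> x a \<in> zhalf_subalg \<phi> G"
    and Y: "\<And>b. divpow \<phi> y b \<in> zhalf_subalg \<phi> G"
  shows "divpow \<phi> z t \<in> zhalf_subalg \<phi> G"
proof (induction t rule: less_induct)
  case (less t)
  have "divpow \<phi> x t * divpow \<phi> y t
       = (\<Sum>k<t. divpow \<phi> y (t-k) * divpow \<phi> z k * divpow \<phi> x (t-k)) + divpow \<phi> z t"
    unfolding divided_identity[OF hom xz yz xy] lessThan_Suc_atMost[symmetric] sum.lessThan_Suc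
    by (simp add: divpow_0[OF hom])
  then have "divpow \<phi> z t = divpow \<phi> x t * divpow \<phi> y t
       - (\<Sum>k<t. divpow \<phi> y (t-k) * divpow \<phi> z k * divpow \<phi> x (t-k))"
    by (simp add: algebra_simps)
  also have "\<dots> \<in> zhalf_subalg \<phi> G"
  proof (rule zh_diff)
    show "divpow \<phi> x t * divpow \<phi> y t \<in> zhalf_subalg \<phi> G" by (rule zhalf_subalg.mult[OF X Y])
    show "(\<Sum>k<t. divpow \<phi> y (t-k) * divpow \<phi> z k * divpow \<phi> x (t-k)) \<in> zhalf_subalg \<phi> G"
    proof (rule zh_sum)
      fix k assume "k \<in> {..<t}"
      then have "k < t" by simp
      show "divpow \<phi> y (t-k) * divpow \<phi> z k * divpow \<phi> x (t-k) \<in> zhalf_subalg \<phi> G"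
        by (rule zhalf_subalg.mult[OF zhalf_subalg.mult[OF Y less[OF \<open>k < t\<close>]] X])
    qed simp
  qed
  finally show ?case .
qed

lemma cartan_adj1: "cartan a (a+1) = -1" by (simp add: cartan_def)
lemma cartan_adj2: "cartan (a+1) a = -1" by (simp add: cartan_def)
lemma cartan_far: "a + 2 \<le> m \<Longrightarrow> cartan a m = 0" by (simp add: cartan_def)

lemma commut_zero_iff: "commut x y = 0 \<longleftrightarrow> x * y = y * (x::'a::ring)"
  unfolding commut_def by simp

context
  fixes n :: nat and \<phi> :: "complex \<Rightarrow> 'a::ring_1" and e :: "nat \<Rightarrow> nat \<Rightarrow> 'a" and i r :: nat
  assumes hom: "complex_algebra_hom \<phi>"
    and rels: "yangian_pos_rels n \<phi> e"
    and i1: "1 \<le> i"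
begin

lemma serre0:
  assumes "a \<in> {1..n-1}" "b \<in> {1..n-1}" "cartan a b = -1"
  shows "commut (e a p) (commut (e a p) (e b q)) = 0"
proof -
  have "commut (e a p) (commut (e a p) (e b q)) + commut (e a p) (commut (e a p) (e b q)) = 0"
    using rels assms unfolding yangian_pos_rels_def by blast
  then show ?thesis by (rule two_inv[OF hom])
qed

lemma far0:
  assumes "a \<in> {1..n-1}" "b \<in> {1..n-1}" "cartan a b = 0"
  shows "commut (e a p) (e b q) = 0"
  using rels assms unfolding yangian_pos_rels_def by blast

lemma lemC: "i + k + 2 \<le> m \<Longrightarrow> m \<le> n - 1 \<Longrightarrow> commut (root_vec e i k r) (e m s) = 0"
proof (induction k arbitrary: m)
  case 0
  then show ?case using far0[of i m r s] cartan_far[of i m] i1 by simp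
next
  case (Suc k)
  have h1: "commut (root_vec e i k r) (e m s) = 0" using Suc by simp
  have h2: "commut (e (i + Suc k) 0) (e m s) = 0"
    using far0[of "i + Suc k" m 0 s] cartan_far[of "i + Suc k" m] Suc.prems i1 by simp
  show ?case using commut_of_commuting[OF h1 h2] by simp
qed

lemma lemB: "i + k + 1 \<le> n - 1 \<Longrightarrow>
  commut (e (i+k+1) 0) (commut (e (i+k+1) 0) (root_vec e i k r)) = 0"
proof (induction k)
  case 0
  then show ?case using serre0[of "i+1" i 0 r] cartan_adj2[of i] i1 by simp
next
  case (Suc k)
  have ya: "commut (e (i + Suc k + 1) 0) (root_vec e i k r) = 0"
    using lemC[of k "i + Suc k + 1" 0] Suc.prems commut_antisym[of "e (i + Suc k + 1) 0" "root_vec e i k r"]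
    by simp
  have s: "commut (e (i + Suc k + 1) 0) (commut (e (i + Suc k + 1) 0) (e (i + Suc k) 0)) = 0"
    using serre0[of "i + Suc k + 1" "i + Suc k" 0 0] cartan_adj2[of "i + Suc k"] Suc.prems i1 by simp
  show ?case using stepB[OF ya, of "e (i + Suc k) 0"] s by simp
qed

lemma lemA: "i + k + 1 \<le> n - 1 \<Longrightarrow>
  commut (root_vec e i k r) (commut (root_vec e i k r) (e (i+k+1) 0)) = 0"
proof (induction k)
  case 0
  then show ?case using serre0[of i "i+1" r 0] cartan_adj1[of i] i1 by simp
next
  case (Suc k)
  have ac: "commut (root_vec e i k r) (e (i+k+2) 0) = 0"
    using lemC[of k "i+k+2" 0] Suc.prems by simp
  have aab: "commut (root_vec e i k r) (commut (root_vec e i k r) (e (i+k+1) 0)) = 0"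
    using Suc by simp
  have bba: "commut (e (i+k+1) 0) (commut (e (i+k+1) 0) (root_vec e i k r)) = 0"
    using lemB[of k] Suc.prems by simp
  have bbc: "commut (e (i+k+1) 0) (commut (e (i+k+1) 0) (e (i+k+2) 0)) = 0"
    using serre0[of "i+k+1" "i+k+2" 0 0] cartan_adj1[of "i+k+1"] Suc.prems i1 by simp
  have "commut (commut (root_vec e i k r) (e (i+k+1) 0))
          (commut (commut (root_vec e i k r) (e (i+k+1) 0)) (e (i+k+2) 0)) = 0"
    by (rule stepA[OF two_inv[OF hom] ac aab bba bbc])
  then show ?case by (simp add: add.commute add.left_commute)
qed

lemma main_ind: "i + k \<le> n - 1 \<Longrightarrow>
  divpow \<phi> (root_vec e i k r) t \<in> zhalf_subalg \<phi> {divpow \<phi> (e k s) u | k s u. k \<in> {1..n-1}}"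
proof (induction k arbitrary: t)
  case 0
  then show ?case using i1 by (auto intro!: zhalf_subalg.gen)
next
  case (Suc k)
  define x where "x = root_vec e i k r"
  define y where "y = e (i+k+1) 0"
  have z: "root_vec e i (Suc k) r = commut x y" unfolding x_def y_def by simp
  have A: "commut x (commut x y) = 0" unfolding x_def y_def using lemA[of k] Suc.prems by simp
  have B: "commut y (commut y x) = 0" unfolding x_def y_def using lemB[of k] Suc.prems by simp
  have xz: "x * commut x y = commut x y * x" using A by (simp add: commut_zero_iff)
  have yz: "y * commut x y = commut x y * y"
    using B commut_antisym[of x y] by (simp add: commut_zero_iff[symmetric] commut_def algebra_simps)
  have xy: "x * y - y * x = commut x y" by (simp add: commut_def)
  have X: "\<And>a. divpow \<phi> x a \<in> zhalf_subalg \<phi> {divpow \<phi> (e k s) u | k s u. k \<in> {1..n-1}}"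
    unfolding x_def using Suc by simp
  have Y: "\<And>b. divpow \<phi> y b \<in> zhalf_subalg \<phi> {divpow \<phi> (e k s) u | k s u. k \<in> {1..n-1}}"
    unfolding y_def using Suc.prems i1 by (auto intro!: zhalf_subalg.gen)
  show ?case unfolding z by (rule heis_mem[OF hom xz yz xy X Y])
qed

end

theorem proposition2p7:
  fixes n :: nat and \<phi> :: "complex \<Rightarrow> 'a::ring_1" and e :: "nat \<Rightarrow> nat \<Rightarrow> 'a"
  assumes "n \<ge> 2"
    and "complex_algebra_hom \<phi>"
    and "yangian_pos_rels n \<phi> e"
    and "1 \<le> i" and "i \<le> j" and "j \<le> n - 1"
  shows "divpow \<phi> (e_beta e i j r) t
           \<in> zhalf_subalg \<phi> {divpow \<phi> (e k s) u | k s u. k \<in> {1..n-1}}"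
  unfolding e_beta_def using main_ind[OF assms(2,3,4), of "j - i" r t] assms(5,6) by simp

end
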